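(* Let $K,L$ be (not necessarily associative) rings with identity, let $q\colon K\to L$ be a multiplicative quadratic map with $f(a,b)=q(a+b)-q(a)-q(b)$, and let $a\in K$ satisfy $f(a,b)=0$ for all $b\in K$. Then: (1) $q(a)f(b,c)=f(b,c)q(a)=0$ for all $b,c\in K$; (2) if $q(a)$ is not a zero-divisor (in particular $q(a)\neq 0$), then $\operatorname{char}L=2$ and $q$ is a ring homomorphism.
   Context: A map $q\colon K\to L$ between rings with identity is called a multiplicative quadratic map if (i) $q(ab)=q(a)q(b)$ for all $a,b\in K$; (ii) $q(n\cdot 1_K)=n^2\cdot 1_L$ for all $n\in\mathbb{Z}$; (iii) the map $f\colon K\times K\to L$, $f(a,b)=q(a+b)-q(a)-q(b)$, is biadditive. *)

theory Defs
  imports Main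
begin

class nonassoc_ring_1 = ab_group_add + times + one +
  assumes nar_distrib_right: "(a + b) * c = a * c + b * c"
    and nar_distrib_left: "a * (b + c) = a * b + a * c"
    and nar_mult_1_left: "1 * a = a"
    and nar_mult_1_right: "a * 1 = a"

definition zmult :: "int \<Rightarrow> 'a::ab_group_add \<Rightarrow> 'a" where
  "zmult n x = (if 0 \<le> n then (\<Sum>i<nat n. x) else - (\<Sum>i<nat (- n). x))"

definition ring_char :: "'a::nonassoc_ring_1 itself \<Rightarrow> nat" where
  "ring_char _ = (if \<exists>n>0. zmult (int n) (1::'a) = 0
                  then (LEAST n. n > 0 \<and> zmult (int n) (1::'a) = 0) else 0)"

definition mult_quadratic_map :: "('a::nonassoc_ring_1 \<Rightarrow> 'b::nonassoc_ring_1) \<Rightarrow> bool" where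
  "mult_quadratic_map q \<longleftrightarrow>
     (\<forall>a b. q (a * b) = q a * q b) \<and>
     (\<forall>n::int. q (zmult n 1) = zmult (n^2) 1) \<and>
     (\<forall>a a' b. q (a + a' + b) - q (a + a') - q b
               = (q (a + b) - q a - q b) + (q (a' + b) - q a' - q b)) \<and>
     (\<forall>a b b'. q (a + (b + b')) - q a - q (b + b')
               = (q (a + b) - q a - q b) + (q (a + b') - q a - q b'))"

definition zero_divisor :: "'a::nonassoc_ring_1 \<Rightarrow> bool" where
  "zero_divisor x \<longleftrightarrow> x = 0 \<or> (\<exists>y. y \<noteq> 0 \<and> (x * y = 0 \<or> y * x = 0))"

definition ring_hom_map :: "('a::nonassoc_ring_1 \<Rightarrow> 'b::nonassoc_ring_1) \<Rightarrow> bool" where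
  "ring_hom_map q \<longleftrightarrow> (\<forall>a b. q (a + b) = q a + q b) \<and> (\<forall>a b. q (a * b) = q a * q b) \<and> q 1 = 1"

end

theory Submission
  imports Defs
begin

context nonassoc_ring_1
begin
lemma nar_mult_zero_right: "a * 0 = 0"
proof -
  have "a * 0 = a * 0 + a * 0" using nar_distrib_left[of a 0 0] by simp
  thus ?thesis by simp
qed
lemma nar_diff_left: "a * (b - c) = a * b - a * c"
proof -
  have "a * (b - c) + a * c = a * b" using nar_distrib_left[of a "b - c" c] by simp
  thus ?thesis by (simp add: eq_diff_eq)
qed
lemma nar_diff_right: "(b - c) * a = b * a - c * a"
proof -
  have "(b - c) * a + c * a = b * a" using nar_distrib_right[of "b - c" c a] by simp
  thus ?thesis by (simp add: eq_diff_eq)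
qed
end

lemma z2: "zmult 2 (x::'c::ab_group_add) = x + x"
  by (simp add: zmult_def numeral_2_eq_2)

lemma z4: "zmult 4 (x::'c::ab_group_add) = x + x + x + x"
proof -
  have e: "{..<nat 4} = {..<Suc (Suc (Suc (Suc 0)))}" by simp
  have "zmult 4 x = (\<Sum>i<nat 4. x)" unfolding zmult_def by simp
  also have "\<dots> = (\<Sum>i<Suc (Suc (Suc (Suc 0))). x)" by (simp only: e)
  also have "\<dots> = x + x + x + x" by (simp only: sum.lessThan_Suc lessThan_0 sum.empty add_0)
  finally show ?thesis .
qed

theorem lemma2p2:
  fixes q :: "'a::nonassoc_ring_1 \<Rightarrow> 'b::nonassoc_ring_1" and a :: 'a
  defines "f \<equiv> (\<lambda>x y. q (x + y) - q x - q y)"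
  assumes "mult_quadratic_map q"
    and "\<forall>b. f a b = 0"
  shows "(\<forall>b c. q a * f b c = 0 \<and> f b c * q a = 0)
       \<and> (\<not> zero_divisor (q a) \<longrightarrow> ring_char TYPE('b) = 2 \<and> ring_hom_map q)"
proof -
  have M: "\<And>x y. q (x * y) = q x * q y" using assms(2) unfolding mult_quadratic_map_def by blast
  have Z: "\<And>n::int. q (zmult n 1) = zmult (n^2) 1" using assms(2) unfolding mult_quadratic_map_def by blast
  have B1: "\<And>x x' y. f (x + x') y = f x y + f x' y"
    using assms(2) unfolding mult_quadratic_map_def f_def by blast
  have B2: "\<And>x y y'. f x (y + y') = f x y + f x y'"
    using assms(2) unfolding mult_quadratic_map_def f_def by blast
  have S: "\<And>x y. f x y = f y x" unfolding f_def by (simp add: add.commute algebra_simps)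
  have R: "\<And>y. f a y = 0" using assms(3) by blast
  have KL: "\<And>x b c. q x * f b c = f (x * b) (x * c)"
    unfolding f_def by (simp add: nar_distrib_left[symmetric] M nar_diff_left)
  have KR: "\<And>x b c. f b c * q x = f (b * x) (c * x)"
    unfolding f_def by (simp add: nar_distrib_right[symmetric] M nar_diff_right)
  have qa: "\<And>y. q (a + y) = q a + q y" using R[unfolded f_def] by (simp add: algebra_simps)
  have qa': "\<And>y. q (y + a) = q y + q a" using qa by (simp add: add.commute)
  have radL: "\<And>y c. f y (a * c) = 0"
  proof -
    fix y c
    have "q (a + y) * f 1 c = f ((a + y) * 1) ((a + y) * c)" by (rule KL)
    also have "\<dots> = f a (a*c) + f a (y*c) + f y (a*c) + f y (y*c)"
      by (simp add: nar_mult_1_right nar_distrib_right B1 B2 algebra_simps)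
    finally have e1: "q (a + y) * f 1 c = f a (a*c) + f a (y*c) + f y (a*c) + f y (y*c)" .
    have "q (a + y) * f 1 c = q a * f 1 c + q y * f 1 c" by (simp add: qa nar_distrib_right)
    also have "\<dots> = f a (a*c) + f y (y*c)" by (simp add: KL nar_mult_1_right)
    finally show "f y (a * c) = 0" using e1 R by (simp add: algebra_simps)
  qed
  have radR: "\<And>y c. f y (c * a) = 0"
  proof -
    fix y c
    have "f 1 c * q (y + a) = f (1 * (y + a)) (c * (y + a))" by (rule KR)
    also have "\<dots> = f y (c*y) + f y (c*a) + f a (c*y) + f a (c*a)"
      by (simp add: nar_mult_1_left nar_distrib_left B1 B2 algebra_simps)
    finally have e1: "f 1 c * q (y + a) = f y (c*y) + f y (c*a) + f a (c*y) + f a (c*a)" .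
    have "f 1 c * q (y + a) = f 1 c * q y + f 1 c * q a" by (simp add: qa' nar_distrib_left)
    also have "\<dots> = f y (c*y) + f a (c*a)" by (simp add: KR nar_mult_1_left)
    finally show "f y (c * a) = 0" using e1 R by (simp add: algebra_simps)
  qed
  have P1: "\<forall>b c. q a * f b c = 0 \<and> f b c * q a = 0"
    using KL KR radL radR by simp
  have P2: "ring_char TYPE('b) = 2 \<and> ring_hom_map q" if nz: "\<not> zero_divisor (q a)"
  proof -
    have fz: "\<And>b c. f b c = 0"
    proof -
      fix b c
      show "f b c = 0"
      proof (rule ccontr)
        assume "f b c \<noteq> 0"
        hence "zero_divisor (q a)" using P1 unfolding zero_divisor_def by blast
        thus False using nz by simp
      qed
    qed
    have add: "\<And>b c. q (b + c) = q b + q c" using fz unfolding f_def by (simp add: algebra_simps)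
    have q1: "q 1 = 1" using Z[of 1] by (simp add: zmult_def)
    have "q (1 + 1) = (1::'b) + 1 + 1 + 1" 
    proof -
      have "q (zmult 2 1) = zmult 4 (1::'b)" using Z[of 2] by simp
      thus ?thesis by (simp only: z2 z4)
    qed
    moreover have "q (1 + 1) = (1::'b) + 1" using add q1 by simp
    ultimately have two: "(1::'b) + 1 = 0" by (simp add: algebra_simps)
    have one: "(1::'b) \<noteq> 0"
    proof
      assume "(1::'b) = 0"
      hence "q a = 0" using nar_mult_1_right[of "q a"] nar_mult_zero_right[of "q a"] by simp
      thus False using nz unfolding zero_divisor_def by simp
    qed
    have zi1: "zmult (int 1) (1::'b) \<noteq> 0" using one by (simp add: zmult_def)
    have zi2: "zmult (int 2) (1::'b) = 0" using two by (simp add: zmult_def numeral_2_eq_2)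
    have "(LEAST n. n > 0 \<and> zmult (int n) (1::'b) = 0) = 2"
    proof (rule Least_equality)
      show "2 > (0::nat) \<and> zmult (int 2) (1::'b) = 0" using zi2 by simp
    next
      fix n :: nat assume "n > 0 \<and> zmult (int n) (1::'b) = 0"
      thus "2 \<le> n" using zi1 by (cases "n = 1") auto
    qed
    hence "ring_char TYPE('b) = 2" unfolding ring_char_def
      using zi2 by (metis zero_less_numeral)
    moreover have "ring_hom_map q" unfolding ring_hom_map_def using add M q1 by simp
    ultimately show ?thesis by simp
  qed
  show ?thesis using P1 P2 by blast
qed

end
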